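(* Let $n\ge 1$, let $a=(a_m)_{m\ge 0}$, $b=(b_m)_{m\ge0}$ be complex sequences with $b_0=0$ and $b_m\ne0$ for $m\ge1$, let $(p_m)_{m\ge0}$ be the monic polynomials with $p_{-1}=0$, $p_0=1$, $p_{m+1}(x)=(x-a_m)p_m(x)-b_mp_{m-1}(x)$ ($m\ge0$), and let $W:OY(\mathfrak{gl}_n,a,b)\to Y(\mathfrak{gl}_n)$ be the algebra isomorphism with $W(\tilde t^{(r)}_{ij})=t^{(r)}_{ij}+\sum_{l=0}^{r-1}p^r_lt^{(l)}_{ij}$, where $p_r(x)=\sum_{l=0}^rp^r_lx^l$. Define numbers $q^r_l$ ($0\le l\le r$, $q^r_r=1$) by $x^r=\sum_{l=0}^rq^r_l\,p_l(x)$ for all $r\ge0$. Then the inverse $W^{-1}:Y(\mathfrak{gl}_n)\to OY(\mathfrak{gl}_n,a,b)$ is given by $$t^{(r)}_{ij}\longmapsto \tilde t^{(r)}_{ij}+\sum_{l=0}^{r-1}q^r_l\,\tilde t^{(l)}_{ij},\qquad r\ge1,$$ and, on generating series, $W^{-1}(t_{ij}(u))=\frac{1}{2\pi i}\oint_{|z|=1}K^{-1}(z,\tfrac1u)\,\tilde T_{ij}(z)\frac{dz}{z}$ for $i,j=1,\dots,n$, with kernel $K^{-1}(z,u)=\sum_{l\ge0}u^l\sum_{m=0}^lq^l_mz^m$.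
   Context: $Y(\mathfrak{gl}_n)$ is the unital associative $\mathbb C$-algebra with generators $t^{(r)}_{ij}$ ($1\le i,j\le n$, $r\ge1$) and relations $[t^{(r+1)}_{ij},t^{(s)}_{kl}]-[t^{(r)}_{ij},t^{(s+1)}_{kl}]=t^{(r)}_{kj}t^{(s)}_{il}-t^{(s)}_{kj}t^{(r)}_{il}$ ($r,s\ge0$), $t^{(0)}_{ij}=\delta_{ij}$; $t_{ij}(u)=\sum_{r\ge0}t^{(r)}_{ij}u^{-r}$. $OY(\mathfrak{gl}_n,a,b)$ is the unital associative algebra with generators $\tilde t^{(r)}_{ij}$ ($r\ge1$) and relations $[\tilde t^{(r+1)}_{ij}+a_r\tilde t^{(r)}_{ij}+b_r\tilde t^{(r-1)}_{ij},\tilde t^{(s)}_{kl}]-[\tilde t^{(r)}_{ij},\tilde t^{(s+1)}_{kl}+a_s\tilde t^{(s)}_{kl}+b_s\tilde t^{(s-1)}_{kl}]=\tilde t^{(r)}_{kj}\tilde t^{(s)}_{il}-\tilde t^{(s)}_{kj}\tilde t^{(r)}_{il}$ ($r,s\ge0$), with $\tilde t^{(0)}_{ij}=\delta_{ij}$, $\tilde t^{(-1)}_{ij}=0$; $\tilde T_{ij}(u)=\delta_{ij}+\sum_{r\ge1}\tilde t^{(r)}_{ij}u^{-r}$. The contour integral $\frac{1}{2\pi i}\oint_{|z|=1}F(z)\frac{dz}{z}$ is understood formally as the coefficient of $z^0$ in $F(z)$, taken coefficientwise in $u^{-1}$. *)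

theory Defs
  imports "HOL-Computational_Algebra.Polynomial" "HOL-Library.Function_Algebras"
begin

text \<open>Generators: a triple (i,j,k) with i,j in the finite index type 'n (so n = CARD('n) \<ge> 1)
  and k :: nat stands for the generator with superscript r = k+1 (r \<ge> 1).
  An element of the free unital associative C-algebra on these generators is a finitely
  supported function from words (lists of generators) to complex numbers.\<close>

type_synonym 'n fa = "('n \<times> 'n \<times> nat) list \<Rightarrow> complex"

definition FA :: "'n fa set" where
  "FA = {f. finite {w. f w \<noteq> 0}}"

definition fa_one :: "'n fa" where
  "fa_one = (\<lambda>w. if w = [] then 1 else 0)"

definition fa_smult :: "complex \<Rightarrow> 'n fa \<Rightarrow> 'n fa" where
  "fa_smult c f = (\<lambda>w. c * f w)"

definition fa_mult :: "'n fa \<Rightarrow> 'n fa \<Rightarrow> 'n fa" where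
  "fa_mult f g = (\<lambda>w. \<Sum>k\<le>length w. f (take k w) * g (drop k w))"

definition fa_gen :: "'n \<times> 'n \<times> nat \<Rightarrow> 'n fa" where
  "fa_gen x = (\<lambda>w. if w = [x] then 1 else 0)"

definition fa_comm :: "'n fa \<Rightarrow> 'n fa \<Rightarrow> 'n fa" where
  "fa_comm x y = fa_mult x y - fa_mult y x"

definition gen :: "'n \<Rightarrow> 'n \<Rightarrow> nat \<Rightarrow> 'n fa" where
  "gen i j r = (if r = 0 then (if i = j then fa_one else 0) else fa_gen (i, j, r - 1))"

definition gen_pred :: "'n \<Rightarrow> 'n \<Rightarrow> nat \<Rightarrow> 'n fa" where
  "gen_pred i j r = (if r = 0 then 0 else gen i j (r - 1))"

text \<open>Unique unital algebra homomorphism out of the free algebra extending phi on generators.\<close>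
definition fa_ext :: "('n \<times> 'n \<times> nat \<Rightarrow> 'm fa) \<Rightarrow> 'n fa \<Rightarrow> 'm fa" where
  "fa_ext phi f = (\<Sum>w\<in>{w. f w \<noteq> 0}. fa_smult (f w) (foldr fa_mult (map phi w) fa_one))"

inductive_set fa_ideal :: "'n fa set \<Rightarrow> 'n fa set" for R where
  base: "x \<in> R \<Longrightarrow> x \<in> fa_ideal R"
| zero: "0 \<in> fa_ideal R"
| add: "x \<in> fa_ideal R \<Longrightarrow> y \<in> fa_ideal R \<Longrightarrow> x + y \<in> fa_ideal R"
| smult: "x \<in> fa_ideal R \<Longrightarrow> fa_smult c x \<in> fa_ideal R"
| lmult: "x \<in> fa_ideal R \<Longrightarrow> y \<in> FA \<Longrightarrow> fa_mult y x \<in> fa_ideal R"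
| rmult: "x \<in> fa_ideal R \<Longrightarrow> y \<in> FA \<Longrightarrow> fa_mult x y \<in> fa_ideal R"

text \<open>Equality in the quotient algebra (free algebra modulo the ideal generated by R).\<close>
definition fa_cong :: "'n fa set \<Rightarrow> 'n fa \<Rightarrow> 'n fa \<Rightarrow> bool" where
  "fa_cong R x y \<longleftrightarrow> x - y \<in> fa_ideal R"

definition yangian_rels :: "'n fa set" where
  "yangian_rels = {fa_comm (gen i j (r + 1)) (gen k l s) - fa_comm (gen i j r) (gen k l (s + 1))
      - (fa_mult (gen k j r) (gen i l s) - fa_mult (gen k j s) (gen i l r)) | i j k l r s. True}"

definition OY_rels :: "(nat \<Rightarrow> complex) \<Rightarrow> (nat \<Rightarrow> complex) \<Rightarrow> 'n fa set" where
  "OY_rels a b = {fa_comm (gen i j (r + 1) + fa_smult (a r) (gen i j r) + fa_smult (b r) (gen_pred i j r))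
                           (gen k l s)
      - fa_comm (gen i j r) (gen k l (s + 1) + fa_smult (a s) (gen k l s) + fa_smult (b s) (gen_pred k l s))
      - (fa_mult (gen k j r) (gen i l s) - fa_mult (gen k j s) (gen i l r)) | i j k l r s. True}"

fun opoly :: "(nat \<Rightarrow> complex) \<Rightarrow> (nat \<Rightarrow> complex) \<Rightarrow> nat \<Rightarrow> complex poly" where
  "opoly a b 0 = 1"
| "opoly a b (Suc 0) = [:- a 0, 1:]"
| "opoly a b (Suc (Suc m)) =
     [:- a (Suc m), 1:] * opoly a b (Suc m) - smult (b (Suc m)) (opoly a b m)"

definition W_gen :: "(nat \<Rightarrow> complex) \<Rightarrow> (nat \<Rightarrow> complex) \<Rightarrow> 'n \<times> 'n \<times> nat \<Rightarrow> 'n fa" where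
  "W_gen a b x = (case x of (i, j, k) \<Rightarrow>
      gen i j (k + 1) + (\<Sum>l<k + 1. fa_smult (coeff (opoly a b (k + 1)) l) (gen i j l)))"

definition W_map :: "(nat \<Rightarrow> complex) \<Rightarrow> (nat \<Rightarrow> complex) \<Rightarrow> 'n fa \<Rightarrow> 'n fa" where
  "W_map a b = fa_ext (W_gen a b)"

text \<open>Coefficients of K^{-1}(z, 1/u) = sum_l u^{-l} sum_{m\<le>l} q^l_m z^m:
  the coefficient of u^{-l} z^m.\<close>
definition Kinv_coeff :: "(nat \<Rightarrow> nat \<Rightarrow> complex) \<Rightarrow> nat \<Rightarrow> nat \<Rightarrow> complex" where
  "Kinv_coeff q l m = (if m \<le> l then q l m else 0)"

text \<open>Coefficient of u^{-l} of (1/2 pi i) \<ointegral> K(z,1/u) T(z) dz/z, taken formally as the coefficient of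
  z^0, where K(z,1/u) = sum_{l,m\<ge>0} K l m u^{-l} z^m (finitely many m for each l) and
  T(z) = sum_{s\<ge>0} T s z^{-s}: the z^0 coefficient pairs z^m with z^{-m}.\<close>
definition oint_coeff :: "(nat \<Rightarrow> nat \<Rightarrow> complex) \<Rightarrow> (nat \<Rightarrow> 'n fa) \<Rightarrow> nat \<Rightarrow> 'n fa" where
  "oint_coeff K T l = (\<Sum>m\<in>{m. K l m \<noteq> 0}. fa_smult (K l m) (T m))"

end

theory Submission
  imports Defs
begin

lemma opoly_monic: "degree (opoly a b n) \<le> n \<and> coeff (opoly a b n) n = 1"
proof (induction a b n rule: opoly.induct)
  case (3 a b m)
  let ?P = "opoly a b (Suc m)" and ?Q = "opoly a b m"
  have dA: "degree ([:- a (Suc m), 1:] * ?P) \<le> Suc (Suc m)"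
    using degree_mult_le[of "[:- a (Suc m), 1:]" ?P] 3 by simp
  have dB: "degree (smult (b (Suc m)) ?Q) \<le> Suc (Suc m)"
    using 3 degree_smult_le[of "b (Suc m)" ?Q] by simp
  have "degree (opoly a b (Suc (Suc m))) \<le> Suc (Suc m)"
    using degree_diff_le[OF dA dB] by simp
  moreover have "coeff ([:- a (Suc m), 1:] * ?P) (Suc (Suc m)) = 1"
    using 3 by (simp add: mult_pCons_left coeff_eq_0)
  moreover have "coeff (smult (b (Suc m)) ?Q) (Suc (Suc m)) = 0"
    using 3 by (simp add: coeff_eq_0)
  ultimately show ?case by simp
qed simp_all

lemma opoly_coeff0: "l > n \<Longrightarrow> coeff (opoly a b n) l = 0"
  using opoly_monic[of a b n] by (simp add: coeff_eq_0)

lemma fa_smult_0[simp]: "fa_smult 0 f = 0" by (simp add: fa_smult_def fun_eq_iff)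
lemma fa_smult_zero[simp]: "fa_smult c 0 = 0" by (simp add: fa_smult_def fun_eq_iff)
lemma fa_smult_1[simp]: "fa_smult 1 f = f" by (simp add: fa_smult_def fun_eq_iff)
lemma fa_smult_add_left: "fa_smult (x + y) f = fa_smult x f + fa_smult y f"
  by (simp add: fa_smult_def fun_eq_iff ring_distribs)
lemma fa_smult_add_right: "fa_smult c (f + g) = fa_smult c f + fa_smult c g"
  by (simp add: fa_smult_def fun_eq_iff ring_distribs)
lemma fa_smult_assoc: "fa_smult c (fa_smult d f) = fa_smult (c * d) f"
  by (simp add: fa_smult_def fun_eq_iff)
lemma sum_fun_apply': "(\<Sum>x\<in>A. f x) w = (\<Sum>x\<in>A. (f x) w)"
  by (induction A rule: infinite_finite_induct) simp_all
lemma fa_smult_sum_right: "fa_smult c (\<Sum>x\<in>A. f x) = (\<Sum>x\<in>A. fa_smult c (f x))"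
  by (simp add: fun_eq_iff fa_smult_def sum_fun_apply' sum_distrib_left)
lemma fa_smult_sum_left: "fa_smult (\<Sum>x\<in>A. c x) f = (\<Sum>x\<in>A. fa_smult (c x) f)"
  by (simp add: fun_eq_iff fa_smult_def sum_fun_apply' sum_distrib_right)

lemma FA_zero[simp]: "0 \<in> FA" by (simp add: FA_def)
lemma FA_add: "f \<in> FA \<Longrightarrow> g \<in> FA \<Longrightarrow> f + g \<in> FA"
  unfolding FA_def by (auto intro: finite_subset[of _ "{w. f w \<noteq> 0} \<union> {w. g w \<noteq> 0}"])
lemma FA_smult: "f \<in> FA \<Longrightarrow> fa_smult c f \<in> FA"
  unfolding FA_def fa_smult_def by (auto intro: finite_subset[of _ "{w. f w \<noteq> 0}"])
lemma FA_sum: "(\<And>x. x \<in> A \<Longrightarrow> f x \<in> FA) \<Longrightarrow> (\<Sum>x\<in>A. f x) \<in> FA"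
  by (induction A rule: infinite_finite_induct) (simp_all add: FA_add)
lemma FA_one: "fa_one \<in> FA"
  unfolding FA_def fa_one_def by (auto intro: finite_subset[of _ "{[]}"])
lemma FA_fa_gen: "fa_gen x \<in> FA"
  unfolding FA_def fa_gen_def by (auto intro: finite_subset[of _ "{[x]}"])
lemma FA_gen: "gen i j r \<in> FA"
  unfolding gen_def by (simp add: FA_one FA_fa_gen)

lemma fa_ext_eq:
  assumes "finite S" "{w. f w \<noteq> 0} \<subseteq> S"
  shows "fa_ext phi f = (\<Sum>w\<in>S. fa_smult (f w) (foldr fa_mult (map phi w) fa_one))"
  unfolding fa_ext_def by (rule sum.mono_neutral_left) (use assms in auto)

lemma fa_ext_add:
  assumes "f \<in> FA" "g \<in> FA"
  shows "fa_ext phi (f + g) = fa_ext phi f + fa_ext phi g"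
proof -
  let ?S = "{w. f w \<noteq> 0} \<union> {w. g w \<noteq> 0}"
  have fin: "finite ?S" using assms by (simp add: FA_def)
  have "fa_ext phi (f + g) = (\<Sum>w\<in>?S. fa_smult ((f + g) w) (foldr fa_mult (map phi w) fa_one))"
    by (rule fa_ext_eq[OF fin]) auto
  also have "\<dots> = fa_ext phi f + fa_ext phi g"
    by (simp add: fa_ext_eq[OF fin] fa_smult_add_left sum.distrib)
  finally show ?thesis .
qed

lemma fa_ext_smult:
  assumes "f \<in> FA"
  shows "fa_ext phi (fa_smult c f) = fa_smult c (fa_ext phi f)"
proof -
  let ?S = "{w. f w \<noteq> 0}"
  have fin: "finite ?S" using assms by (simp add: FA_def)
  have "fa_ext phi (fa_smult c f) = (\<Sum>w\<in>?S. fa_smult (fa_smult c f w) (foldr fa_mult (map phi w) fa_one))"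
    by (rule fa_ext_eq[OF fin]) (auto simp: fa_smult_def)
  also have "\<dots> = fa_smult c (fa_ext phi f)"
    by (simp add: fa_ext_eq[OF fin] fa_smult_sum_right fa_smult_assoc) (simp add: fa_smult_def)
  finally show ?thesis .
qed

lemma fa_ext_zero: "fa_ext phi 0 = 0" by (simp add: fa_ext_def)

lemma fa_ext_sum: "(\<And>x. x \<in> A \<Longrightarrow> f x \<in> FA) \<Longrightarrow>
   fa_ext phi (\<Sum>x\<in>A. fa_smult (c x) (f x)) = (\<Sum>x\<in>A. fa_smult (c x) (fa_ext phi (f x)))"
proof (induction A rule: infinite_finite_induct)
  case (insert x F)
  have "fa_ext phi (\<Sum>x\<in>insert x F. fa_smult (c x) (f x))
     = fa_ext phi (fa_smult (c x) (f x)) + fa_ext phi (\<Sum>x\<in>F. fa_smult (c x) (f x))"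
    using insert by (simp add: fa_ext_add FA_smult FA_sum)
  then show ?case using insert by (simp add: fa_ext_smult del: plus_fun_apply)
qed (simp_all add: fa_ext_zero)

lemma fa_mult_one: "fa_mult h fa_one = h"
proof
  fix w
  have "fa_mult h fa_one w = (\<Sum>k\<le>length w. if k = length w then h w else 0)"
    unfolding fa_mult_def fa_one_def by (rule sum.cong) auto
  then show "fa_mult h fa_one w = h w" by simp
qed

lemma fa_ext_one: "fa_ext phi fa_one = fa_one"
proof -
  have "{w. fa_one w \<noteq> 0} = {[]}" by (auto simp: fa_one_def)
  then show ?thesis by (simp add: fa_ext_def) (simp add: fa_one_def)
qed

lemma fa_ext_gen: "fa_ext phi (fa_gen x) = phi x"
proof -
  have "{w. fa_gen x w \<noteq> 0} = {[x]}" by (auto simp: fa_gen_def)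
  then show ?thesis by (simp add: fa_ext_def fa_mult_one) (simp add: fa_gen_def)
qed

lemma W_gen_formula: "W_map a b (gen i j r) = (\<Sum>l\<le>r. fa_smult (coeff (opoly a b r) l) (gen i j l))"
proof (cases r)
  case 0
  then show ?thesis by (simp add: W_map_def gen_def fa_ext_one fa_ext_zero)
next
  case (Suc k)
  have "W_map a b (gen i j r) = gen i j (k + 1) + (\<Sum>l<k + 1. fa_smult (coeff (opoly a b (k + 1)) l) (gen i j l))"
  proof -
    have "gen i j r = fa_gen (i, j, k)" using Suc by (simp add: gen_def)
    then have "W_map a b (gen i j r) = W_gen a b (i, j, k)" by (simp add: W_map_def fa_ext_gen)
    then show ?thesis by (simp only: W_gen_def prod.case)
  qed
  also have "\<dots> = (\<Sum>l<Suc k. fa_smult (coeff (opoly a b (Suc k)) l) (gen i j l))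
      + fa_smult (coeff (opoly a b (Suc k)) (Suc k)) (gen i j (Suc k))"
  proof -
    have c: "coeff (opoly a b (Suc k)) (Suc k) = 1" using opoly_monic[of a b "Suc k"] by simp
    show ?thesis unfolding c fa_smult_1 Suc_eq_plus1[symmetric] by (rule add.commute)
  qed
  also have "\<dots> = (\<Sum>l\<le>r. fa_smult (coeff (opoly a b r) l) (gen i j l))"
    unfolding Suc by (subst sum.atMost_Suc) (simp only: lessThan_Suc_atMost)
  finally show ?thesis .
qed

lemma W_X:
  assumes q_def: "\<And>r. [:0, 1:] ^ r = (\<Sum>l\<le>r. smult (q r l) (opoly a b l))"
  shows "W_map a b (\<Sum>m\<le>r. fa_smult (q r m) (gen i j m)) = gen i j r"
proof -
  have "W_map a b (\<Sum>m\<le>r. fa_smult (q r m) (gen i j m))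
      = (\<Sum>m\<le>r. fa_smult (q r m) (W_map a b (gen i j m)))"
    unfolding W_map_def by (rule fa_ext_sum) (rule FA_gen)
  also have "\<dots> = (\<Sum>m\<le>r. fa_smult (q r m) (\<Sum>l\<le>r. fa_smult (coeff (opoly a b m) l) (gen i j l)))"
  proof (rule sum.cong[OF refl])
    fix m assume m: "m \<in> {..r}"
    have "(\<Sum>l\<le>m. fa_smult (coeff (opoly a b m) l) (gen i j l))
        = (\<Sum>l\<le>r. fa_smult (coeff (opoly a b m) l) (gen i j l))"
      by (rule sum.mono_neutral_left) (use m in \<open>auto simp: opoly_coeff0\<close>)
    then show "fa_smult (q r m) (W_map a b (gen i j m)) =
      fa_smult (q r m) (\<Sum>l\<le>r. fa_smult (coeff (opoly a b m) l) (gen i j l))"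
      by (simp only: W_gen_formula)
  qed
  also have "\<dots> = (\<Sum>m\<le>r. \<Sum>l\<le>r. fa_smult (q r m * coeff (opoly a b m) l) (gen i j l))"
    by (simp only: fa_smult_sum_right fa_smult_assoc)
  also have "\<dots> = (\<Sum>l\<le>r. \<Sum>m\<le>r. fa_smult (q r m * coeff (opoly a b m) l) (gen i j l))"
    by (rule sum.swap)
  also have "\<dots> = (\<Sum>l\<le>r. fa_smult (\<Sum>m\<le>r. q r m * coeff (opoly a b m) l) (gen i j l))"
    by (simp only: fa_smult_sum_left)
  also have "\<dots> = (\<Sum>l\<le>r. fa_smult (coeff ([:0, 1:] ^ r) l) (gen i j l))"
    by (simp only: q_def coeff_sum coeff_smult)
  also have "\<dots> = (\<Sum>l\<le>r. fa_smult (if l = r then 1 else 0) (gen i j l))"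
  proof -
    have "[:0, 1:] ^ r = (monom 1 r :: complex poly)" using monom_altdef[of "1::complex" r] by simp
    then show ?thesis by (simp only: coeff_monom eq_commute[of r])
  qed
  also have "\<dots> = gen i j r"
  proof -
    have "(\<Sum>l\<le>r. fa_smult (if l = r then 1 else 0) (gen i j l)) = (\<Sum>l\<le>r. if l = r then gen i j l else 0)"
      by (rule sum.cong) auto
    then show ?thesis by simp
  qed
  finally show ?thesis .
qed

lemma q_diag:
  assumes q_def: "\<And>r. [:0, 1:] ^ r = (\<Sum>l\<le>r. smult (q r l) (opoly a b l))"
  shows "q r r = 1"
proof -
  have "[:0, 1:] ^ r = (monom 1 r :: complex poly)" using monom_altdef[of "1::complex" r] by simp
  then have "1 = coeff (\<Sum>l\<le>r. smult (q r l) (opoly a b l)) r" using q_def[of r] by simp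
  also have "\<dots> = (\<Sum>l\<le>r. q r l * coeff (opoly a b l) r)" by (simp add: coeff_sum)
  also have "\<dots> = (\<Sum>l\<le>r. if l = r then q r r else 0)"
    by (rule sum.cong) (auto simp: opoly_coeff0 opoly_monic)
  finally show ?thesis by simp
qed

theorem mainTheorem2:
  fixes a b :: "nat \<Rightarrow> complex"
    and q :: "nat \<Rightarrow> nat \<Rightarrow> complex"
    and Winv :: "'n::finite fa \<Rightarrow> 'n fa"
  assumes b0: "b 0 = 0"
    and bnz: "\<And>m. m \<ge> 1 \<Longrightarrow> b m \<noteq> 0"
    and q_def: "\<And>r. [:0, 1:] ^ r = (\<Sum>l\<le>r. smult (q r l) (opoly a b l))"
    and W_wd: "\<And>x y :: 'n fa. x \<in> FA \<Longrightarrow> y \<in> FA \<Longrightarrow> fa_cong (OY_rels a b) x y \<Longrightarrow>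
                  fa_cong yangian_rels (W_map a b x) (W_map a b y)"
    and Winv_FA: "\<And>y. y \<in> FA \<Longrightarrow> Winv y \<in> FA"
    and Winv_wd: "\<And>y y'. y \<in> FA \<Longrightarrow> y' \<in> FA \<Longrightarrow> fa_cong yangian_rels y y' \<Longrightarrow>
                  fa_cong (OY_rels a b) (Winv y) (Winv y')"
    and Winv_left: "\<And>x. x \<in> FA \<Longrightarrow> fa_cong (OY_rels a b) (Winv (W_map a b x)) x"
    and Winv_right: "\<And>y. y \<in> FA \<Longrightarrow> fa_cong yangian_rels (W_map a b (Winv y)) y"
  shows "(\<forall>i j r. r \<ge> 1 \<longrightarrow>
            fa_cong (OY_rels a b) (Winv (gen i j r))
              (gen i j r + (\<Sum>l<r. fa_smult (q r l) (gen i j l))))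
       \<and> (\<forall>i j r. fa_cong (OY_rels a b) (Winv (gen i j r))
              (oint_coeff (Kinv_coeff q) (gen i j) r))"
proof -
  define X :: "'n \<Rightarrow> 'n \<Rightarrow> nat \<Rightarrow> 'n fa" where "X i j r = (\<Sum>m\<le>r. fa_smult (q r m) (gen i j m))" for i j r
  have XFA: "X i j r \<in> FA" for i j r unfolding X_def by (intro FA_sum FA_smult FA_gen)
  have cong: "fa_cong (OY_rels a b) (Winv (gen i j r)) (X i j r)" for i j r
    using Winv_left[OF XFA[of i j r]] W_X[of q a b r i j, OF q_def] unfolding X_def by simp
  have P1: "X i j r = gen i j r + (\<Sum>l<r. fa_smult (q r l) (gen i j l))" if r1: "r \<ge> 1" for i j r
  proof -
    obtain k where k: "r = Suc k" using r1 by (cases r) simp_all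
    have "X i j r = (\<Sum>l\<le>k. fa_smult (q r l) (gen i j l)) + fa_smult (q r r) (gen i j r)"
      unfolding X_def k by (rule sum.atMost_Suc)
    also have "\<dots> = gen i j r + (\<Sum>l<r. fa_smult (q r l) (gen i j l))"
      unfolding q_diag[OF q_def] fa_smult_1 k lessThan_Suc_atMost by (rule add.commute)
    finally show ?thesis .
  qed
  have P2: "oint_coeff (Kinv_coeff q) (gen i j) r = X i j r" for i j r
    unfolding oint_coeff_def X_def
    by (rule sum.mono_neutral_cong_left) (auto simp: Kinv_coeff_def split: if_splits)
  show ?thesis using cong P1 P2 by (metis (no_types))
qed

end
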